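(* Let $n=1$ and let $\mathbb{T}$ be a radical tower over $\mathbb{C}(t)$ such that its tower variety $\mathcal{V}_\mathbb{T}$ is a rational curve. Then for any radical parametrization $\mathcal{P}$ whose entries lie in the last field of $\mathbb{T}$, the radical variety $\mathcal{V}_\mathcal{P}$ is a rational curve.
   Context: A radical tower $\mathbb{T}$ over $\mathbb{C}(t)$ is a tower of fields $\mathbb{F}_0=\mathbb{C}(t)\subseteq\dots\subseteq\mathbb{F}_m$ with $\mathbb{F}_i=\mathbb{F}_{i-1}(\delta_i)$, $\delta_i^{e_i}=\alpha_i\in\mathbb{F}_{i-1}$, $e_i\in\mathbb{N}$, where the $\delta_i$ are realized as analytic functions $\delta_i(t)$ by fixing branch values at some point. A radical parametrization is a tuple $\overline{x}=(x_1,\dots,x_r)$, $r>1$, of elements of $\mathbb{F}_m$ whose derivative with respect to $t$ (derivation extended to $\mathbb{F}_m$) is nonzero (Jacobian of rank $1$). The tower variety is $\mathcal{V}_\mathbb{T}=\overline{\{(t,\delta_1(t),\dots,\delta_m(t))\}}\subset\mathbb{C}^{1+m}$ (Zariski closure of the image of $t\mapsto(t,\overline{\delta}(t))$). The radical variety $\mathcal{V}_\mathcal{P}\subset\mathbb{C}^r$ is the Zariski closure of the image $\{\overline{x}(t)\}$. *)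

theory Defs
  imports "HOL-Complex_Analysis.Complex_Analysis" "HOL-Computational_Algebra.Polynomial"
begin

text \<open>Points of affine space C^N are encoded as functions nat => complex whose
  coordinates with index >= N are zero.  Polynomial functions over C in the
  variables with index < N:\<close>
inductive_set polyfun :: "nat \<Rightarrow> ((nat \<Rightarrow> complex) \<Rightarrow> complex) set" for N :: nat where
  pf_const: "(\<lambda>x. c) \<in> polyfun N"
| pf_var: "j < N \<Longrightarrow> (\<lambda>x. x j) \<in> polyfun N"
| pf_add: "p \<in> polyfun N \<Longrightarrow> q \<in> polyfun N \<Longrightarrow> (\<lambda>x. p x + q x) \<in> polyfun N"
| pf_mult: "p \<in> polyfun N \<Longrightarrow> q \<in> polyfun N \<Longrightarrow> (\<lambda>x. p x * q x) \<in> polyfun N"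

definition zariski_closure :: "nat \<Rightarrow> (nat \<Rightarrow> complex) set \<Rightarrow> (nat \<Rightarrow> complex) set" where
  "zariski_closure N S = {x. (\<forall>j\<ge>N. x j = 0) \<and>
      (\<forall>p\<in>polyfun N. (\<forall>s\<in>S. p s = 0) \<longrightarrow> p x = 0)}"

definition rational_curve :: "nat \<Rightarrow> (nat \<Rightarrow> complex) set \<Rightarrow> bool" where
  "rational_curve N V \<longleftrightarrow>
     (\<exists>(num :: nat \<Rightarrow> complex poly) (den :: complex poly).
        den \<noteq> 0 \<and>
        (\<exists>j<N. \<exists>s1 s2. poly den s1 \<noteq> 0 \<and> poly den s2 \<noteq> 0 \<and>
            poly (num j) s1 / poly den s1 \<noteq> poly (num j) s2 / poly den s2) \<and>
        V = zariski_closure N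
              {(\<lambda>j. if j < N then poly (num j) s / poly den s else 0) | s. poly den s \<noteq> 0})"

definition tower_point :: "nat \<Rightarrow> (nat \<Rightarrow> complex \<Rightarrow> complex) \<Rightarrow> complex \<Rightarrow> (nat \<Rightarrow> complex)" where
  "tower_point m \<delta> t = (\<lambda>k. if k = 0 then t else if k \<le> m then \<delta> k t else 0)"

text \<open>Radical tower over C(t) with m radicals, realized as analytic functions
  delta_1, ..., delta_m on the connected open set U:
  delta_i ^ e_i = alpha_i with alpha_i in F_{i-1} = C(t)(delta_1,...,delta_{i-1}),
  i.e. alpha_i = A/B with A, B polynomials in t, delta_1, ..., delta_{i-1} and
  B(t, delta(t)) not identically zero on U.\<close>
definition radical_tower ::
  "complex set \<Rightarrow> nat \<Rightarrow> (nat \<Rightarrow> complex \<Rightarrow> complex) \<Rightarrow> (nat \<Rightarrow> nat) \<Rightarrow> bool" where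
  "radical_tower U m \<delta> e \<longleftrightarrow>
     open U \<and> connected U \<and> U \<noteq> {} \<and>
     (\<forall>i\<in>{1..m}. \<delta> i holomorphic_on U \<and> e i > 0 \<and>
        (\<exists>A\<in>polyfun i. \<exists>B\<in>polyfun i.
            (\<exists>t\<in>U. B (tower_point m \<delta> t) \<noteq> 0) \<and>
            (\<forall>t\<in>U. \<delta> i t ^ e i * B (tower_point m \<delta> t) = A (tower_point m \<delta> t))))"

definition tower_variety :: "complex set \<Rightarrow> nat \<Rightarrow> (nat \<Rightarrow> complex \<Rightarrow> complex) \<Rightarrow> (nat \<Rightarrow> complex) set" where
  "tower_variety U m \<delta> = zariski_closure (Suc m) (tower_point m \<delta> ` U)"

definition param_entry ::
  "nat \<Rightarrow> (nat \<Rightarrow> complex \<Rightarrow> complex) \<Rightarrow> (nat \<Rightarrow> (nat \<Rightarrow> complex) \<Rightarrow> complex)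
     \<Rightarrow> (nat \<Rightarrow> (nat \<Rightarrow> complex) \<Rightarrow> complex) \<Rightarrow> nat \<Rightarrow> complex \<Rightarrow> complex" where
  "param_entry m \<delta> P Q j t = P j (tower_point m \<delta> t) / Q j (tower_point m \<delta> t)"

text \<open>Radical parametrization (x_0,...,x_{r-1}), r > 1, entries in F_m,
  with nonzero derivative (Jacobian of rank 1).\<close>
definition radical_param ::
  "complex set \<Rightarrow> nat \<Rightarrow> (nat \<Rightarrow> complex \<Rightarrow> complex) \<Rightarrow> nat
     \<Rightarrow> (nat \<Rightarrow> (nat \<Rightarrow> complex) \<Rightarrow> complex) \<Rightarrow> (nat \<Rightarrow> (nat \<Rightarrow> complex) \<Rightarrow> complex) \<Rightarrow> bool" where
  "radical_param U m \<delta> r P Q \<longleftrightarrow>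
     r > 1 \<and>
     (\<forall>j<r. P j \<in> polyfun (Suc m) \<and> Q j \<in> polyfun (Suc m) \<and>
            (\<exists>t\<in>U. Q j (tower_point m \<delta> t) \<noteq> 0)) \<and>
     (\<exists>j<r. \<exists>t\<in>U. Q j (tower_point m \<delta> t) \<noteq> 0 \<and> deriv (param_entry m \<delta> P Q j) t \<noteq> 0)"

definition radical_variety ::
  "complex set \<Rightarrow> nat \<Rightarrow> (nat \<Rightarrow> complex \<Rightarrow> complex) \<Rightarrow> nat
     \<Rightarrow> (nat \<Rightarrow> (nat \<Rightarrow> complex) \<Rightarrow> complex) \<Rightarrow> (nat \<Rightarrow> (nat \<Rightarrow> complex) \<Rightarrow> complex) \<Rightarrow> (nat \<Rightarrow> complex) set" where
  "radical_variety U m \<delta> r P Q = zariski_closure r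
     {(\<lambda>j. if j < r then param_entry m \<delta> P Q j t else 0) | t.
        t \<in> U \<and> (\<forall>j<r. Q j (tower_point m \<delta> t) \<noteq> 0)}"

end

theory Submission
  imports Defs
begin

lemma zero_product_holo:
  fixes f g :: "complex \<Rightarrow> complex"
  assumes "open U" "connected U" "f holomorphic_on U" "g holomorphic_on U"
    and "\<And>t. t \<in> U \<Longrightarrow> f t * g t = 0" and "t0 \<in> U" "g t0 \<noteq> 0" and "t \<in> U"
  shows "f t = 0"
proof -
  define V where "V = U \<inter> g -` (-{0})"
  have "continuous_on U g" using assms(4) holomorphic_on_imp_continuous_on by blast
  hence oV: "open V" unfolding V_def using assms(1) by (intro continuous_open_preimage) auto
  have "f t = (\<lambda>_. 0) t"
  proof (rule analytic_continuation_open[of V U f "\<lambda>_. 0"])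
    show "V \<noteq> {}" using assms V_def by auto
    show "\<And>z. z \<in> V \<Longrightarrow> f z = 0" using assms(5) V_def by auto
  qed (use assms oV V_def in auto)
  thus ?thesis by simp
qed

lemma prod_nonzero_holo:
  fixes f :: "nat \<Rightarrow> complex \<Rightarrow> complex"
  assumes "open U" "connected U" "finite I" "\<And>i. i \<in> I \<Longrightarrow> f i holomorphic_on U"
    and "\<And>i. i \<in> I \<Longrightarrow> \<exists>t\<in>U. f i t \<noteq> 0" "U \<noteq> {}"
  shows "\<exists>t\<in>U. (\<Prod>i\<in>I. f i t) \<noteq> 0"
  using assms(3,4,5)
proof (induction I rule: finite_induct)
  case empty
  then show ?case using assms(6) by auto
next
  case (insert x F)
  then obtain t0 where t0: "t0 \<in> U" "(\<Prod>i\<in>F. f i t0) \<noteq> 0" by auto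
  obtain t1 where t1: "t1 \<in> U" "f x t1 \<noteq> 0" using insert.prems(2)[of x] by blast
  show ?case
  proof (rule ccontr)
    assume "\<not> ?thesis"
    hence pz: "\<And>t. t \<in> U \<Longrightarrow> f x t * (\<Prod>i\<in>F. f i t) = 0" using insert by auto
    have "f x t1 = 0"
      by (rule zero_product_holo[OF assms(1,2), of "f x" "\<lambda>t. \<Prod>i\<in>F. f i t" t0])
        (use insert t0 t1 pz in \<open>auto intro!: holomorphic_intros\<close>)
    thus False using t1 by simp
  qed
qed

lemma polyfun_holo:
  assumes "p \<in> polyfun N" "\<And>j. j < N \<Longrightarrow> (\<lambda>s. X s j) holomorphic_on S"
  shows "(\<lambda>s. p (X s)) holomorphic_on S"
  using assms by induction (auto intro!: holomorphic_intros)

lemma polyfun_prod: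
  assumes "finite I" "\<And>i. i \<in> I \<Longrightarrow> Q i \<in> polyfun N"
  shows "(\<lambda>w. \<Prod>i\<in>I. Q i w) \<in> polyfun N"
  using assms
proof (induction I rule: finite_induct)
  case empty
  then show ?case using polyfun.pf_const[of 1] by simp
next
  case (insert x F)
  then show ?case using polyfun.pf_mult[of "Q x" N "\<lambda>w. \<Prod>i\<in>F. Q i w"] by simp
qed

lemma polyfun_pow:
  assumes "p \<in> polyfun N" shows "(\<lambda>w. p w ^ k) \<in> polyfun N"
proof (induction k)
  case 0 then show ?case using polyfun.pf_const[of 1] by simp
next
  case (Suc k) then show ?case using polyfun.pf_mult[OF assms Suc] by simp
qed

lemma zc_sub:
  assumes "\<And>x j. x \<in> S \<Longrightarrow> j \<ge> N \<Longrightarrow> x j = 0" "x \<in> S"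
  shows "x \<in> zariski_closure N S"
  using assms unfolding zariski_closure_def by auto

lemma zc_van:
  assumes "x \<in> zariski_closure N S" "p \<in> polyfun N" "\<And>s. s \<in> S \<Longrightarrow> p s = 0"
  shows "p x = 0"
  using assms unfolding zariski_closure_def by auto

lemma zc_eq:
  assumes "\<And>p. p \<in> polyfun N \<Longrightarrow> (\<forall>s\<in>S. p s = 0) \<longleftrightarrow> (\<forall>s\<in>S'. p s = 0)"
  shows "zariski_closure N S = zariski_closure N S'"
  using assms unfolding zariski_closure_def by auto


lemma clear_denoms:
  assumes "g \<in> polyfun r" "\<And>j. j < r \<Longrightarrow> Q j \<in> polyfun M" "\<And>j. j < r \<Longrightarrow> P j \<in> polyfun M"
  shows "\<exists>h\<in>polyfun M. \<exists>k. \<forall>w. (\<forall>j<r. Q j w \<noteq> 0) \<longrightarrow>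
           g (\<lambda>j. if j<r then P j w / Q j w else 0) * (\<Prod>j<r. Q j w)^k = h w"
  using assms(1)
proof induction
  case (pf_const c)
  show ?case by (rule bexI[of _ "\<lambda>w. c"]) (auto intro: polyfun.pf_const exI[of _ 0])
next
  case (pf_var j)
  define h where "h = (\<lambda>w. P j w * (\<Prod>i\<in>{..<r}-{j}. Q i w))"
  have hp: "h \<in> polyfun M" unfolding h_def
    by (rule polyfun.pf_mult) (use assms pf_var in \<open>auto intro!: polyfun_prod\<close>)
  have "\<forall>w. (\<forall>j<r. Q j w \<noteq> 0) \<longrightarrow>
           (\<lambda>j. if j<r then P j w / Q j w else 0) j * (\<Prod>j<r. Q j w)^1 = h w"
  proof (intro allI impI)
    fix w assume nz: "\<forall>j<r. Q j w \<noteq> 0"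
    have "(\<Prod>j<r. Q j w) = Q j w * (\<Prod>i\<in>{..<r}-{j}. Q i w)"
      using pf_var by (simp add: prod.remove)
    thus "(\<lambda>j. if j<r then P j w / Q j w else 0) j * (\<Prod>j<r. Q j w)^1 = h w"
      using nz pf_var by (simp add: h_def)
  qed
  thus ?case using hp by blast
next
  case (pf_add p q)
  then obtain h1 k1 h2 k2 where h1: "h1 \<in> polyfun M" "\<forall>w. (\<forall>j<r. Q j w \<noteq> 0) \<longrightarrow>
           p (\<lambda>j. if j<r then P j w / Q j w else 0) * (\<Prod>j<r. Q j w)^k1 = h1 w"
    and h2: "h2 \<in> polyfun M" "\<forall>w. (\<forall>j<r. Q j w \<noteq> 0) \<longrightarrow>
           q (\<lambda>j. if j<r then P j w / Q j w else 0) * (\<Prod>j<r. Q j w)^k2 = h2 w" by blast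
  have QP: "(\<lambda>w. \<Prod>j<r. Q j w) \<in> polyfun M" using assms by (auto intro!: polyfun_prod)
  define h where "h = (\<lambda>w. h1 w * (\<Prod>j<r. Q j w)^k2 + h2 w * (\<Prod>j<r. Q j w)^k1)"
  have "h \<in> polyfun M" unfolding h_def
    by (intro polyfun.pf_add polyfun.pf_mult h1 h2 polyfun_pow QP)
  moreover have "\<forall>w. (\<forall>j<r. Q j w \<noteq> 0) \<longrightarrow>
           (\<lambda>x. p x + q x) (\<lambda>j. if j<r then P j w / Q j w else 0) * (\<Prod>j<r. Q j w)^(k1+k2) = h w"
    using h1(2) h2(2) by (auto simp: h_def power_add algebra_simps)
  ultimately show ?case by blast
next
  case (pf_mult p q)
  then obtain h1 k1 h2 k2 where h1: "h1 \<in> polyfun M" "\<forall>w. (\<forall>j<r. Q j w \<noteq> 0) \<longrightarrow>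
           p (\<lambda>j. if j<r then P j w / Q j w else 0) * (\<Prod>j<r. Q j w)^k1 = h1 w"
    and h2: "h2 \<in> polyfun M" "\<forall>w. (\<forall>j<r. Q j w \<noteq> 0) \<longrightarrow>
           q (\<lambda>j. if j<r then P j w / Q j w else 0) * (\<Prod>j<r. Q j w)^k2 = h2 w" by blast
  define h where "h = (\<lambda>w. h1 w * h2 w)"
  have "h \<in> polyfun M" unfolding h_def by (intro polyfun.pf_mult h1 h2)
  moreover have "\<forall>w. (\<forall>j<r. Q j w \<noteq> 0) \<longrightarrow>
           (\<lambda>x. p x * q x) (\<lambda>j. if j<r then P j w / Q j w else 0) * (\<Prod>j<r. Q j w)^(k1+k2) = h w"
  proof (intro allI impI)
    fix w assume "\<forall>j<r. Q j w \<noteq> 0"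
    thus "(\<lambda>x. p x * q x) (\<lambda>j. if j<r then P j w / Q j w else 0) * (\<Prod>j<r. Q j w)^(k1+k2) = h w"
      using h1(2)[rule_format, of w] h2(2)[rule_format, of w]
      by (auto simp: h_def power_add algebra_simps)
  qed
  ultimately show ?case by blast
qed

lemma poly_rep:
  fixes den :: "complex poly"
  assumes "p \<in> polyfun N"
  shows "\<exists>pp k. \<forall>s. poly den s \<noteq> 0 \<longrightarrow>
     p (\<lambda>j. if j<N then poly (num j) s / poly den s else 0) * poly den s ^ k = poly pp s"
  using assms
proof induction
  case (pf_const c)
  show ?case by (rule exI[of _ "[:c:]"], rule exI[of _ 0]) simp
next
  case (pf_var j)
  show ?case by (rule exI[of _ "num j"], rule exI[of _ 1]) (use pf_var in simp)
next
  case (pf_add p q)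
  then obtain p1 k1 p2 k2 where
    h1: "\<forall>s. poly den s \<noteq> 0 \<longrightarrow> p (\<lambda>j. if j<N then poly (num j) s / poly den s else 0) * poly den s ^ k1 = poly p1 s"
    and h2: "\<forall>s. poly den s \<noteq> 0 \<longrightarrow> q (\<lambda>j. if j<N then poly (num j) s / poly den s else 0) * poly den s ^ k2 = poly p2 s"
    by blast
  show ?case
  proof (rule exI[of _ "p1 * den^k2 + p2 * den^k1"], rule exI[of _ "k1+k2"], intro allI impI)
    fix s assume "poly den s \<noteq> 0"
    thus "(\<lambda>x. p x + q x) (\<lambda>j. if j<N then poly (num j) s / poly den s else 0) * poly den s ^ (k1+k2) = poly (p1 * den^k2 + p2 * den^k1) s"
      using h1[rule_format, of s] h2[rule_format, of s]
      by (auto simp: power_add algebra_simps)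
  qed
next
  case (pf_mult p q)
  then obtain p1 k1 p2 k2 where
    h1: "\<forall>s. poly den s \<noteq> 0 \<longrightarrow> p (\<lambda>j. if j<N then poly (num j) s / poly den s else 0) * poly den s ^ k1 = poly p1 s"
    and h2: "\<forall>s. poly den s \<noteq> 0 \<longrightarrow> q (\<lambda>j. if j<N then poly (num j) s / poly den s else 0) * poly den s ^ k2 = poly p2 s"
    by blast
  show ?case
  proof (rule exI[of _ "p1 * p2"], rule exI[of _ "k1+k2"], intro allI impI)
    fix s assume "poly den s \<noteq> 0"
    hence e1: "p (\<lambda>j. if j<N then poly (num j) s / poly den s else 0) * poly den s ^ k1 = poly p1 s"
      and e2: "q (\<lambda>j. if j<N then poly (num j) s / poly den s else 0) * poly den s ^ k2 = poly p2 s"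
      using h1 h2 by auto
    have "(\<lambda>x. p x * q x) (\<lambda>j. if j<N then poly (num j) s / poly den s else 0) * poly den s ^ (k1+k2) =
      (p (\<lambda>j. if j<N then poly (num j) s / poly den s else 0) * poly den s ^ k1) *
      (q (\<lambda>j. if j<N then poly (num j) s / poly den s else 0) * poly den s ^ k2)"
      by (simp add: power_add algebra_simps)
    thus "(\<lambda>x. p x * q x) (\<lambda>j. if j<N then poly (num j) s / poly den s else 0) * poly den s ^ (k1+k2) = poly (p1 * p2) s"
      using e1 e2 by simp
  qed
qed

lemma poly_rep2:
  fixes den :: "complex poly"
  assumes "p \<in> polyfun N" "q \<in> polyfun N"
  shows "\<exists>pp qq k. \<forall>s. poly den s \<noteq> 0 \<longrightarrow>
     p (\<lambda>j. if j<N then poly (num j) s / poly den s else 0) * poly den s ^ k = poly pp s \<and>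
     q (\<lambda>j. if j<N then poly (num j) s / poly den s else 0) * poly den s ^ k = poly qq s"
proof -
  obtain p1 k1 where h1: "\<forall>s. poly den s \<noteq> 0 \<longrightarrow> p (\<lambda>j. if j<N then poly (num j) s / poly den s else 0) * poly den s ^ k1 = poly p1 s"
    using poly_rep[OF assms(1)] by blast
  obtain p2 k2 where h2: "\<forall>s. poly den s \<noteq> 0 \<longrightarrow> q (\<lambda>j. if j<N then poly (num j) s / poly den s else 0) * poly den s ^ k2 = poly p2 s"
    using poly_rep[OF assms(2)] by blast
  show ?thesis
  proof (rule exI[of _ "p1 * den^k2"], rule exI[of _ "p2 * den^k1"], rule exI[of _ "k1+k2"], intro allI impI)
    fix s assume "poly den s \<noteq> 0"
    thus "p (\<lambda>j. if j<N then poly (num j) s / poly den s else 0) * poly den s ^ (k1+k2) = poly (p1 * den^k2) s \<and>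
     q (\<lambda>j. if j<N then poly (num j) s / poly den s else 0) * poly den s ^ (k1+k2) = poly (p2 * den^k1) s"
      using h1[rule_format, of s] h2[rule_format, of s]
      by (auto simp: power_add algebra_simps)
  qed
qed


theorem theorem4p9:
  fixes U :: "complex set" and m r :: nat and \<delta> :: "nat \<Rightarrow> complex \<Rightarrow> complex"
    and e :: "nat \<Rightarrow> nat" and P Q :: "nat \<Rightarrow> (nat \<Rightarrow> complex) \<Rightarrow> complex"
  assumes "radical_tower U m \<delta> e"
    and "rational_curve (Suc m) (tower_variety U m \<delta>)"
    and "radical_param U m \<delta> r P Q"
  shows "rational_curve r (radical_variety U m \<delta> r P Q)"
proof -
  define tp where "tp = tower_point m \<delta>"
  define F where "F = (\<lambda>w. (\<lambda>j. if j<r then P j w / Q j w else 0) :: nat \<Rightarrow> complex)"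
  define PQ where "PQ = (\<lambda>w. \<Prod>j<r. Q j w)"
  have oU: "open U" and cU: "connected U" and neU: "U \<noteq> {}"
    and dh: "\<And>i. i \<in> {1..m} \<Longrightarrow> \<delta> i holomorphic_on U"
    using assms(1) unfolding radical_tower_def by auto
  obtain num den where den0: "den \<noteq> (0::complex poly)"
    and Weq: "zariski_closure (Suc m) (tp ` U) = zariski_closure (Suc m)
       {(\<lambda>j. if j < Suc m then poly (num j) s / poly den s else 0) | s. poly den s \<noteq> 0}"
    using assms(2) unfolding rational_curve_def tower_variety_def tp_def by blast
  define \<phi> where "\<phi> = (\<lambda>s. (\<lambda>j. if j < Suc m then poly (num j) s / poly den s else 0) :: nat \<Rightarrow> complex)"
  define D where "D = {s. poly den s \<noteq> 0}"
  have r1: "r > 1" and Pp: "\<And>j. j < r \<Longrightarrow> P j \<in> polyfun (Suc m)"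
    and Qp: "\<And>j. j < r \<Longrightarrow> Q j \<in> polyfun (Suc m)"
    and Qnz: "\<And>j. j < r \<Longrightarrow> \<exists>t\<in>U. Q j (tp t) \<noteq> 0"
    and dv: "\<exists>j<r. \<exists>t\<in>U. Q j (tp t) \<noteq> 0 \<and> deriv (param_entry m \<delta> P Q j) t \<noteq> 0"
    using assms(3) unfolding radical_param_def tp_def by auto
  have PQp: "PQ \<in> polyfun (Suc m)" unfolding PQ_def using Qp by (auto intro!: polyfun_prod)
  have HT: "(\<lambda>t. h (tp t)) holomorphic_on U" if "h \<in> polyfun (Suc m)" for h
  proof (rule polyfun_holo[OF that])
    fix j assume j: "j < Suc m"
    show "(\<lambda>t. tp t j) holomorphic_on U"
    proof (cases "j = 0")
      case True
      then show ?thesis unfolding tp_def tower_point_def by (simp add: holomorphic_intros)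
    next
      case False
      hence "(\<lambda>t. tp t j) = \<delta> j" using j unfolding tp_def tower_point_def by auto
      then show ?thesis using dh[of j] j False by auto
    qed
  qed
  have oD: "open D" unfolding D_def
  proof -
    have "{s. poly den s \<noteq> 0} = UNIV - {s. poly den s = 0}" by auto
    thus "open {s. poly den s \<noteq> 0}"
      using poly_roots_finite[OF den0] by (auto intro!: open_Diff finite_imp_closed)
  qed
  have cD: "connected D"
  proof -
    have "D = UNIV - {s. poly den s = 0}" unfolding D_def by auto
    thus ?thesis using poly_roots_finite[OF den0]
      by (auto intro!: connected_open_diff_countable countable_finite)
  qed
  have HD: "(\<lambda>s. h (\<phi> s)) holomorphic_on D" if "h \<in> polyfun (Suc m)" for h
  proof (rule polyfun_holo[OF that])
    fix j assume j: "j < Suc m"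
    have "(\<lambda>s. poly (num j) s / poly den s) holomorphic_on D"
      by (rule holomorphic_on_divide) (auto simp: D_def intro: holomorphic_intros)
    thus "(\<lambda>s. \<phi> s j) holomorphic_on D" using j unfolding \<phi>_def by simp
  qed
  have setD: "{(\<lambda>j. if j < Suc m then poly (num j) s / poly den s else 0) | s. poly den s \<noteq> 0} = \<phi> ` D"
    unfolding \<phi>_def D_def by blast
  have Weq': "zariski_closure (Suc m) (tp ` U) = zariski_closure (Suc m) (\<phi> ` D)"
    using Weq setD by simp
  have Z: "(\<forall>t\<in>U. h (tp t) = 0) \<longleftrightarrow> (\<forall>s\<in>D. h (\<phi> s) = 0)" if hp: "h \<in> polyfun (Suc m)" for h
  proof
    assume a: "\<forall>t\<in>U. h (tp t) = 0"
    show "\<forall>s\<in>D. h (\<phi> s) = 0"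
    proof
      fix s assume sD: "s \<in> D"
      have "\<phi> s \<in> zariski_closure (Suc m) (\<phi> ` D)"
      proof (rule zc_sub)
        show "\<phi> s \<in> \<phi> ` D" using sD by blast
      next
        fix x j assume "x \<in> \<phi> ` D" "Suc m \<le> j"
        thus "x j = 0" unfolding \<phi>_def by auto
      qed
      hence "\<phi> s \<in> zariski_closure (Suc m) (tp ` U)" using Weq' by simp
      thus "h (\<phi> s) = 0" by (rule zc_van[OF _ hp]) (use a in blast)
    qed
  next
    assume a: "\<forall>s\<in>D. h (\<phi> s) = 0"
    show "\<forall>t\<in>U. h (tp t) = 0"
    proof
      fix t assume tU: "t \<in> U"
      have "tp t \<in> zariski_closure (Suc m) (tp ` U)"
      proof (rule zc_sub)
        show "tp t \<in> tp ` U" using tU by blast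
      next
        fix x j assume "x \<in> tp ` U" "Suc m \<le> j"
        thus "x j = 0" unfolding tp_def tower_point_def by auto
      qed
      hence "tp t \<in> zariski_closure (Suc m) (\<phi> ` D)" using Weq' by simp
      thus "h (tp t) = 0" by (rule zc_van[OF _ hp]) (use a in blast)
    qed
  qed
  have QU: "\<exists>t\<in>U. PQ (tp t) \<noteq> 0" unfolding PQ_def
    by (rule prod_nonzero_holo[OF oU cU _ _ _ neU, of "{..<r}" "\<lambda>j t. Q j (tp t)"])
       (use HT Qp Qnz in auto)
  have QD: "\<exists>s\<in>D. PQ (\<phi> s) \<noteq> 0"
    using Z[OF PQp] QU by auto
  then obtain s0 where s0: "s0 \<in> D" "PQ (\<phi> s0) \<noteq> 0" by blast
  have PQnz: "\<forall>j<r. Q j w \<noteq> 0" if "PQ w \<noteq> 0" for w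
    using that unfolding PQ_def by auto
  have PQnz': "PQ w \<noteq> 0" if "\<forall>j<r. Q j w \<noteq> 0" for w
    using that unfolding PQ_def by auto
  have ex: "\<forall>j. \<exists>pp qq k. j < r \<longrightarrow> (\<forall>s. poly den s \<noteq> 0 \<longrightarrow>
      P j (\<phi> s) * poly den s ^ k = poly pp s \<and> Q j (\<phi> s) * poly den s ^ k = poly qq s)"
  proof
    fix j
    show "\<exists>pp qq k. j < r \<longrightarrow> (\<forall>s. poly den s \<noteq> 0 \<longrightarrow>
      P j (\<phi> s) * poly den s ^ k = poly pp s \<and> Q j (\<phi> s) * poly den s ^ k = poly qq s)"
    proof (cases "j < r")
      case True
      show ?thesis using poly_rep2[OF Pp[OF True] Qp[OF True], where den=den and num=num]
        unfolding \<phi>_def by blast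
    qed auto
  qed
  then obtain pp qq kk where R0: "\<forall>j. j < r \<longrightarrow> (\<forall>s. poly den s \<noteq> 0 \<longrightarrow>
      P j (\<phi> s) * poly den s ^ kk j = poly (pp j) s \<and> Q j (\<phi> s) * poly den s ^ kk j = poly (qq j) s)"
    by metis
  have RP: "P j (\<phi> s) * poly den s ^ kk j = poly (pp j) s" and RQ: "Q j (\<phi> s) * poly den s ^ kk j = poly (qq j) s"
    if "j < r" "s \<in> D" for j s using R0 that unfolding D_def by auto
  define den' where "den' = den * (\<Prod>i<r. qq i)"
  define num' where "num' = (\<lambda>j. pp j * den * (\<Prod>i\<in>{..<r}-{j}. qq i))"
  define E where "E = {s\<in>D. \<forall>j<r. Q j (\<phi> s) \<noteq> 0}"
  have qqnz: "poly (qq j) s \<noteq> 0 \<longleftrightarrow> Q j (\<phi> s) \<noteq> 0" if "j < r" "s \<in> D" for j s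
    using RQ[OF that] that(2) unfolding D_def by auto
  have K1: "poly den' s \<noteq> 0 \<longleftrightarrow> s \<in> E" for s
  proof -
    have "poly den' s = poly den s * (\<Prod>i<r. poly (qq i) s)" unfolding den'_def by (simp add: poly_prod)
    thus ?thesis using qqnz unfolding E_def D_def by auto
  qed
  have K2: "poly (num' j) s / poly den' s = P j (\<phi> s) / Q j (\<phi> s)" if "s \<in> E" "j < r" for s j
  proof -
    have sD: "s \<in> D" using that E_def by auto
    define rest where "rest = (\<Prod>i\<in>{..<r}-{j}. poly (qq i) s)"
    have d1: "poly den' s = poly den s * (poly (qq j) s * rest)" unfolding den'_def rest_def
      using that(2) by (simp add: poly_prod prod.remove)
    have n1: "poly (num' j) s = poly (pp j) s * poly den s * rest" unfolding num'_def rest_def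
      by (simp add: poly_prod)
    have nz: "poly den s * rest \<noteq> 0" using K1[of s] that d1 by auto
    have "poly (num' j) s / poly den' s = poly (pp j) s / poly (qq j) s"
      using nz unfolding n1 d1 by (simp add: field_simps)
    also have "\<dots> = (P j (\<phi> s) * poly den s ^ kk j) / (Q j (\<phi> s) * poly den s ^ kk j)"
      using RP[OF that(2) sD] RQ[OF that(2) sD] by simp
    also have "\<dots> = P j (\<phi> s) / Q j (\<phi> s)" using sD unfolding D_def by simp
    finally show ?thesis .
  qed
  define A where "A = {t\<in>U. \<forall>j<r. Q j (tp t) \<noteq> 0}"
  have SR: "{(\<lambda>j. if j < r then poly (num' j) s / poly den' s else 0) | s. poly den' s \<noteq> 0} = F ` \<phi> ` E"
  proof -
    have "(\<lambda>j. if j < r then poly (num' j) s / poly den' s else 0) = F (\<phi> s)" if "s \<in> E" for s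
      using K2[OF that] unfolding F_def by auto
    thus ?thesis using K1 by (auto simp: image_iff) (metis (no_types, lifting))
  qed
  have RV: "radical_variety U m \<delta> r P Q = zariski_closure r (F ` tp ` A)"
  proof -
    have "{(\<lambda>j. if j < r then param_entry m \<delta> P Q j t else 0) | t.
        t \<in> U \<and> (\<forall>j<r. Q j (tower_point m \<delta> t) \<noteq> 0)} = F ` tp ` A"
      unfolding param_entry_def F_def A_def tp_def by auto
    thus ?thesis unfolding radical_variety_def by simp
  qed
  have EQ: "(\<forall>x\<in>F ` tp ` A. g x = 0) \<longleftrightarrow> (\<forall>x\<in>F ` \<phi> ` E. g x = 0)" if gp: "g \<in> polyfun r" for g
  proof -
    obtain h k where hp: "h \<in> polyfun (Suc m)"
      and hk: "\<forall>w. (\<forall>j<r. Q j w \<noteq> 0) \<longrightarrow> g (F w) * PQ w ^ k = h w"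
      using clear_denoms[OF gp, of Q "Suc m" P] Qp Pp unfolding F_def PQ_def by blast
    have s1: "(\<forall>x\<in>F ` tp ` A. g x = 0) \<longleftrightarrow> (\<forall>t\<in>A. h (tp t) = 0)"
      using hk PQnz' unfolding A_def by fastforce
    have s2: "(\<forall>t\<in>A. h (tp t) = 0) \<longleftrightarrow> (\<forall>t\<in>U. h (tp t) = 0)"
    proof
      assume a: "\<forall>t\<in>A. h (tp t) = 0"
      obtain t0 where t0: "t0 \<in> U" "PQ (tp t0) \<noteq> 0" using QU by blast
      show "\<forall>t\<in>U. h (tp t) = 0"
      proof
        fix t assume "t \<in> U"
        show "h (tp t) = 0"
        proof (rule zero_product_holo[OF oU cU HT[OF hp] HT[OF PQp] _ t0 \<open>t \<in> U\<close>])
          fix t assume "t \<in> U"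
          thus "h (tp t) * PQ (tp t) = 0" using a PQnz[of "tp t"] unfolding A_def by auto
        qed
      qed
    qed (auto simp: A_def)
    have s4: "(\<forall>s\<in>D. h (\<phi> s) = 0) \<longleftrightarrow> (\<forall>s\<in>E. h (\<phi> s) = 0)"
    proof
      assume a: "\<forall>s\<in>E. h (\<phi> s) = 0"
      show "\<forall>s\<in>D. h (\<phi> s) = 0"
      proof
        fix t assume "t \<in> D"
        show "h (\<phi> t) = 0"
        proof (rule zero_product_holo[OF oD cD HD[OF hp] HD[OF PQp] _ s0 \<open>t \<in> D\<close>])
          fix t assume "t \<in> D"
          thus "h (\<phi> t) * PQ (\<phi> t) = 0" using a PQnz[of "\<phi> t"] unfolding E_def by auto
        qed
      qed
    qed (auto simp: E_def)
    have s5: "(\<forall>s\<in>E. h (\<phi> s) = 0) \<longleftrightarrow> (\<forall>x\<in>F ` \<phi> ` E. g x = 0)"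
      using hk PQnz' unfolding E_def by fastforce
    show ?thesis using s1 s2 Z[OF hp] s4 s5 by simp
  qed
  have closeq: "radical_variety U m \<delta> r P Q = zariski_closure r
      {(\<lambda>j. if j < r then poly (num' j) s / poly den' s else 0) | s. poly den' s \<noteq> 0}"
    unfolding RV SR by (rule zc_eq) (rule EQ)
  have s0E: "s0 \<in> E" using s0 PQnz unfolding E_def by auto
  have den'0: "den' \<noteq> 0" using K1[of s0] s0E by auto
  have NC: "\<exists>j<r. \<exists>s1 s2. poly den' s1 \<noteq> 0 \<and> poly den' s2 \<noteq> 0 \<and>
            poly (num' j) s1 / poly den' s1 \<noteq> poly (num' j) s2 / poly den' s2"
  proof (rule ccontr)
    assume nc: "\<not> ?thesis"
    obtain j0 t0 where j0: "j0 < r" and t0: "t0 \<in> U" "Q j0 (tp t0) \<noteq> 0"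
      and dt0: "deriv (param_entry m \<delta> P Q j0) t0 \<noteq> 0" using dv by blast
    define c where "c = F (\<phi> s0) j0"
    define g where "g = (\<lambda>y::nat\<Rightarrow>complex. y j0 + (- c))"
    have gp: "g \<in> polyfun r" unfolding g_def
      by (rule polyfun.pf_add[OF polyfun.pf_var[OF j0] polyfun.pf_const])
    have "\<forall>x\<in>F ` \<phi> ` E. g x = 0"
    proof
      fix x assume "x \<in> F ` \<phi> ` E"
      then obtain s where sE: "s \<in> E" and x: "x = F (\<phi> s)" by blast
      have "poly (num' j0) s / poly den' s = poly (num' j0) s0 / poly den' s0"
        using nc j0 K1 sE s0E by blast
      hence "F (\<phi> s) j0 = c" using K2[OF sE j0] K2[OF s0E j0] j0 unfolding c_def F_def by simp
      thus "g x = 0" unfolding g_def x by simp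
    qed
    hence gA: "\<forall>x\<in>F ` tp ` A. g x = 0" using EQ[OF gp] by blast
    define f where "f = (\<lambda>t. P j0 (tp t) - c * Q j0 (tp t))"
    have fh: "f holomorphic_on U" unfolding f_def
      using HT[OF Pp[OF j0]] HT[OF Qp[OF j0]] by (auto intro!: holomorphic_intros)
    obtain t1 where t1: "t1 \<in> U" "PQ (tp t1) \<noteq> 0" using QU by blast
    have f0: "f t = 0" if "t \<in> U" for t
    proof (rule zero_product_holo[OF oU cU fh HT[OF PQp] _ t1 that])
      fix t assume tU: "t \<in> U"
      show "f t * PQ (tp t) = 0"
      proof (cases "PQ (tp t) = 0")
        case False
        hence tA: "t \<in> A" using PQnz tU unfolding A_def by auto
        hence "g (F (tp t)) = 0" using gA by blast
        hence "P j0 (tp t) / Q j0 (tp t) = c" using j0 unfolding g_def F_def by simp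
        hence "f t = 0" using tA j0 unfolding A_def f_def by (auto simp: field_simps)
        thus ?thesis by simp
      qed simp
    qed
    define V where "V = U \<inter> (\<lambda>t. Q j0 (tp t)) -` (-{0})"
    have "continuous_on U (\<lambda>t. Q j0 (tp t))"
      using HT[OF Qp[OF j0]] holomorphic_on_imp_continuous_on by blast
    hence oV: "open V" unfolding V_def using oU by (intro continuous_open_preimage) auto
    have t0V: "t0 \<in> V" using t0 V_def by auto
    have onV: "param_entry m \<delta> P Q j0 t = c" if "t \<in> V" for t
    proof -
      have "t \<in> U" "Q j0 (tp t) \<noteq> 0" using that V_def by auto
      thus ?thesis using f0[of t] unfolding param_entry_def f_def tp_def by (auto simp: field_simps)
    qed
    have "eventually (\<lambda>t. param_entry m \<delta> P Q j0 t = (\<lambda>_. c) t) (nhds t0)"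
      unfolding eventually_nhds using oV t0V onV by blast
    hence "deriv (param_entry m \<delta> P Q j0) t0 = deriv (\<lambda>_. c) t0" by (rule deriv_cong_ev) simp
    thus False using dt0 by simp
  qed
  show ?thesis unfolding rational_curve_def
    by (rule exI[of _ num'], rule exI[of _ den']) (use den'0 NC closeq in blast)
qed
end
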